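(* Under the standing setup, assume that $f$ is bounded, i.e. $\sup_{q\in\mathcal P}\|f_q\|_\infty<\infty$. Then for all $u_0\in\mathbb R^d$, $\Big\|\frac{\mathscr S(h)u_0-u_0}{h}-\mathcal Qu_0\Big\|_\infty\to0$ as $h\searrow0$.
   Context: Standing setup: $d\in\mathbb N$; vectors in $\mathbb R^d$ with $\|u\|_\infty=\max_i|u_i|$; inequalities and suprema of vectors are componentwise; reals are identified with constant vectors. A $Q$-matrix is $q\in\mathbb R^{d\times d}$ with $q_{ii}\le0$, $q_{ij}\ge0$ ($i\ne j$), $\sum_jq_{ij}=0$. Let $\mathcal P$ be a set of $Q$-matrices and $f=(f_q)_{q\in\mathcal P}\subset\mathbb R^d$ with $\sup_{q\in\mathcal P}f_q=f_{q_0}=0$ for some $q_0\in\mathcal P$, such that $\mathcal Qu:=\sup_{q\in\mathcal P}(qu+f_q)$ is finite for every $u\in\mathbb R^d$. For $q\in\mathcal P$, $t\ge0$: $S_q(t)u_0:=e^{tq}u_0+\int_0^te^{sq}f_q\,ds$. For $h\ge0$: $\mathcal E_hu_0:=\sup_{q\in\mathcal P}S_q(h)u_0$. $P$ is the set of finite subsets $\pi\subset[0,\infty)$ with $0\in\pi$; $P_t:=\{\pi\in P:\max\pi=t\}$. For $\pi=\{t_0,\dots,t_m\}$ with $0=t_0<\dots<t_m$, $m\ge1$, $\mathcal E_\pi:=\mathcal E_{t_1-t_0}\circ\cdots\circ\mathcal E_{t_m-t_{m-1}}$, and $\mathcal E_{\{0\}}:=\mathcal E_0$. The Nisio semigroup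 of $(\mathcal P,f)$ is $\mathscr S(t)u_0:=\sup_{\pi\in P_t}\mathcal E_\pi u_0$. *)

theory Defs
  imports "HOL-Analysis.Analysis"
begin

text \<open>Vectors in R^d are elements of real^'d (d = CARD('d)), d x d matrices are real^'d^'d.\<close>

definition norm_inf :: "real ^ 'd \<Rightarrow> real" where
  "norm_inf u = Max (range (\<lambda>i. \<bar>u $ i\<bar>))"

definition is_Q_matrix :: "real ^ 'd ^ 'd \<Rightarrow> bool" where
  "is_Q_matrix q \<longleftrightarrow> (\<forall>i. q $ i $ i \<le> 0) \<and> (\<forall>i j. i \<noteq> j \<longrightarrow> q $ i $ j \<ge> 0)
     \<and> (\<forall>i. (\<Sum>j\<in>UNIV. q $ i $ j) = 0)"

fun mat_pow :: "real ^ 'd ^ 'd \<Rightarrow> nat \<Rightarrow> real ^ 'd ^ 'd" where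
  "mat_pow A 0 = mat 1"
| "mat_pow A (Suc n) = A ** mat_pow A n"

definition mat_exp :: "real ^ 'd ^ 'd \<Rightarrow> real ^ 'd ^ 'd" where
  "mat_exp A = (\<Sum>n. (1 / fact n :: real) *\<^sub>R mat_pow A n)"

definition S_q :: "real ^ 'd ^ 'd \<Rightarrow> real ^ 'd \<Rightarrow> real \<Rightarrow> real ^ 'd \<Rightarrow> real ^ 'd" where
  "S_q q fq t u0 = mat_exp (t *\<^sub>R q) *v u0 + integral {0..t} (\<lambda>s. mat_exp (s *\<^sub>R q) *v fq)"

definition vsup :: "'a set \<Rightarrow> ('a \<Rightarrow> real ^ 'd) \<Rightarrow> real ^ 'd" where
  "vsup A g = (\<chi> i. SUP a\<in>A. g a $ i)"

definition genQ :: "(real ^ 'd ^ 'd) set \<Rightarrow> (real ^ 'd ^ 'd \<Rightarrow> real ^ 'd) \<Rightarrow> real ^ 'd \<Rightarrow> real ^ 'd" where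
  "genQ P f u = vsup P (\<lambda>q. q *v u + f q)"

definition E_h :: "(real ^ 'd ^ 'd) set \<Rightarrow> (real ^ 'd ^ 'd \<Rightarrow> real ^ 'd) \<Rightarrow> real \<Rightarrow> real ^ 'd \<Rightarrow> real ^ 'd" where
  "E_h P f h u0 = vsup P (\<lambda>q. S_q q (f q) h u0)"

definition partitions_upto :: "real \<Rightarrow> real set set" where
  "partitions_upto t = {\<pi>. finite \<pi> \<and> 0 \<in> \<pi> \<and> (\<forall>s\<in>\<pi>. 0 \<le> s) \<and> Max \<pi> = t}"

text \<open>For \<pi> = {t0 < ... < tm}, m \<ge> 1: \<E>_\<pi> = \<E>_{t1-t0} \<circ> ... \<circ> \<E>_{tm-t_{m-1}};
  \<E>_{{0}} = \<E>_0.\<close>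
definition E_part :: "(real ^ 'd ^ 'd) set \<Rightarrow> (real ^ 'd ^ 'd \<Rightarrow> real ^ 'd) \<Rightarrow> real set \<Rightarrow> real ^ 'd \<Rightarrow> real ^ 'd" where
  "E_part P f \<pi> u0 =
    (if \<pi> = {0} then E_h P f 0 u0
     else (let ts = sorted_list_of_set \<pi>;
               hs = map2 (\<lambda>a b. b - a) ts (tl ts)
           in foldr (\<lambda>h g. E_h P f h \<circ> g) hs id u0))"

definition nisio :: "(real ^ 'd ^ 'd) set \<Rightarrow> (real ^ 'd ^ 'd \<Rightarrow> real ^ 'd) \<Rightarrow> real \<Rightarrow> real ^ 'd \<Rightarrow> real ^ 'd" where
  "nisio P f t u0 = vsup (partitions_upto t) (\<lambda>\<pi>. E_part P f \<pi> u0)"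

end

theory Submission
  imports Defs
begin

definition nu :: "real ^ 'd \<Rightarrow> real" where "nu v = (\<Sum>i\<in>UNIV. \<bar>v $ i\<bar>)"
definition mn :: "real ^ 'd ^ 'd \<Rightarrow> real" where "mn A = (\<Sum>i\<in>UNIV. \<Sum>j\<in>UNIV. \<bar>A $ i $ j\<bar>)"

lemma nu_nonneg: "0 \<le> nu v" unfolding nu_def by (simp add: sum_nonneg)
lemma mn_nonneg: "0 \<le> mn v" unfolding mn_def by (simp add: sum_nonneg)
lemma abs_le_nu: "\<bar>v $ i\<bar> \<le> nu v"
  unfolding nu_def by (rule member_le_sum) auto
lemma norm_le_nu: "norm v \<le> nu v"
  unfolding nu_def by (rule norm_le_l1_cart)
lemma nu_add: "nu (v + w) \<le> nu v + nu w"
  unfolding nu_def by (simp add: sum.distrib[symmetric] sum_mono abs_triangle_ineq)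
lemma nu_minus: "nu (- v) = nu v" unfolding nu_def by simp
lemma nu_diff: "nu (v - w) \<le> nu v + nu w"
  using nu_add[of v "-w"] by (simp add: nu_minus)
lemma nu_scale: "nu (c *\<^sub>R v) = \<bar>c\<bar> * nu v"
  unfolding nu_def by (simp add: abs_mult sum_distrib_left)

lemma nu_mv: "nu (A *v v) \<le> mn A * nu v"
proof -
  have "nu (A *v v) = (\<Sum>i\<in>UNIV. \<bar>\<Sum>j\<in>UNIV. A$i$j * v$j\<bar>)"
    unfolding nu_def matrix_vector_mult_def by simp
  also have "\<dots> \<le> (\<Sum>i\<in>UNIV. \<Sum>j\<in>UNIV. \<bar>A$i$j\<bar> * nu v)"
  proof (rule sum_mono)
    fix i
    have "\<bar>\<Sum>j\<in>UNIV. A$i$j * v$j\<bar> \<le> (\<Sum>j\<in>UNIV. \<bar>A$i$j * v$j\<bar>)" by (rule sum_abs)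
    also have "\<dots> \<le> (\<Sum>j\<in>UNIV. \<bar>A$i$j\<bar> * nu v)"
      by (rule sum_mono) (simp add: abs_mult mult_left_mono abs_le_nu)
    finally show "\<bar>\<Sum>j\<in>UNIV. A$i$j * v$j\<bar> \<le> (\<Sum>j\<in>UNIV. \<bar>A$i$j\<bar> * nu v)" .
  qed
  also have "\<dots> = mn A * nu v" unfolding mn_def by (simp add: sum_distrib_right)
  finally show ?thesis .
qed

lemma mat_pow_mv_Suc: "mat_pow q (Suc n) *v v = q *v (mat_pow q n *v v)"
  by (simp add: matrix_vector_mul_assoc)

lemma nu_pow: "nu (mat_pow q n *v v) \<le> mn q ^ n * nu v"
proof (induction n)
  case 0 then show ?case by simp
next
  case (Suc n)
  have "nu (mat_pow q (Suc n) *v v) \<le> mn q * nu (mat_pow q n *v v)"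
    unfolding mat_pow_mv_Suc by (rule nu_mv)
  also have "\<dots> \<le> mn q * (mn q ^ n * nu v)"
    using Suc mn_nonneg by (rule mult_left_mono)
  finally show ?case by simp
qed

lemma mat_pow_scale: "mat_pow (t *\<^sub>R q) n = (t ^ n) *\<^sub>R mat_pow q n"
proof (induction n)
  case 0 then show ?case by simp
next
  case (Suc n)
  show ?case
    by (simp add: Suc matrix_matrix_mult_def vec_eq_iff sum_distrib_left mult_ac)
qed

lemma norm_mat_le: "norm (A :: real^'d^'d) \<le> (\<Sum>i\<in>UNIV. \<Sum>j\<in>UNIV. \<bar>A$i$j\<bar>)"
proof -
  have "norm A \<le> (\<Sum>i\<in>UNIV. norm (A$i))"
    by (simp add: norm_vec_def L2_set_le_sum)
  also have "\<dots> \<le> (\<Sum>i\<in>UNIV. \<Sum>j\<in>UNIV. \<bar>A$i$j\<bar>)"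
    by (rule sum_mono) (rule norm_le_l1_cart)
  finally show ?thesis .
qed

lemma norm_mat_pow: "norm (mat_pow q n) \<le> real (CARD('d) * CARD('d)) * mn (q::real^'d^'d) ^ n"
proof -
  have e: "\<bar>mat_pow q n $ i $ j\<bar> \<le> mn q ^ n" for i j
  proof -
    have "mat_pow q n $ i $ j = (mat_pow q n *v axis j 1) $ i"
      by (simp add: matrix_vector_mult_basis column_def)
    also have "\<bar>\<dots>\<bar> \<le> nu (mat_pow q n *v axis j 1)" by (rule abs_le_nu)
    also have "\<dots> \<le> mn q ^ n * nu (axis j (1::real))" by (rule nu_pow)
    also have "nu (axis j (1::real)) = 1"
      unfolding nu_def axis_def by (simp add: if_distrib cong: if_cong)
    finally show ?thesis by simp
  qed
  have "norm (mat_pow q n) \<le> (\<Sum>i\<in>UNIV. \<Sum>j\<in>UNIV. \<bar>mat_pow q n$i$j\<bar>)" by (rule norm_mat_le)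
  also have "\<dots> \<le> (\<Sum>i\<in>(UNIV::'d set). \<Sum>j\<in>(UNIV::'d set). mn q ^ n)"
    by (intro sum_mono e)
  finally show ?thesis by simp
qed


lemma exp_sums_real: "(\<lambda>n. (K::real)^n / fact n) sums exp K"
  using exp_converges[of K] by (simp add: divide_inverse_commute)

lemma summable_matexp: "summable (\<lambda>n. (1 / fact n :: real) *\<^sub>R mat_pow (A::real^'d^'d) n)"
proof (rule summable_comparison_test)
  show "\<exists>N. \<forall>n\<ge>N. norm ((1 / fact n :: real) *\<^sub>R mat_pow A n) \<le> real (CARD('d) * CARD('d)) * (mn A ^ n / fact n)"
  proof (intro exI allI impI)
    fix n
    have "norm ((1 / fact n :: real) *\<^sub>R mat_pow A n) = (1 / fact n) * norm (mat_pow A n)"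
      by simp
    also have "\<dots> \<le> (1 / fact n) * (real (CARD('d) * CARD('d)) * mn A ^ n)"
      by (rule mult_left_mono[OF norm_mat_pow]) simp
    finally show "norm ((1 / fact n :: real) *\<^sub>R mat_pow A n) \<le> real (CARD('d) * CARD('d)) * (mn A ^ n / fact n)"
      by simp
  qed
  show "summable (\<lambda>n. real (CARD('d) * CARD('d)) * (mn A ^ n / fact n))"
    using exp_sums_real[of "mn A"] by (intro summable_mult) (auto simp: sums_iff)
qed

lemma scaleR_mv: "(c *\<^sub>R (A::real^'d^'d)) *v v = c *\<^sub>R (A *v v)"
  by (simp add: matrix_vector_mult_def vec_eq_iff sum_distrib_left mult.assoc)

lemma blin_mv: "bounded_linear (\<lambda>A::real^'d^'d. A *v v)"
proof -
  have "linear (\<lambda>A::real^'d^'d. A *v v)"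
    by (rule linearI) (simp_all add: matrix_vector_mult_def vec_eq_iff sum.distrib
        sum_distrib_left distrib_right mult.assoc)
  then show ?thesis by (simp add: linear_conv_bounded_linear)
qed

lemma matexp_mv_sums:
  "(\<lambda>n. (t ^ n / fact n) *\<^sub>R (mat_pow q n *v v)) sums (mat_exp (t *\<^sub>R q) *v v)"
proof -
  have "(\<lambda>n. (1 / fact n :: real) *\<^sub>R mat_pow (t *\<^sub>R q) n) sums mat_exp (t *\<^sub>R q)"
    unfolding mat_exp_def by (rule summable_sums[OF summable_matexp])
  from bounded_linear.sums[OF _ this, of "\<lambda>A. A *v v"]
  have s: "(\<lambda>n. ((1 / fact n :: real) *\<^sub>R mat_pow (t *\<^sub>R q) n) *v v) sums (mat_exp (t *\<^sub>R q) *v v)"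
    by (simp add: blin_mv)
  have e: "((1 / fact n :: real) *\<^sub>R mat_pow (t *\<^sub>R q) n) *v v = (t ^ n / fact n) *\<^sub>R (mat_pow q n *v v)" for n
    by (simp only: mat_pow_scale scaleR_mv scaleR_scaleR) simp
  show ?thesis using s unfolding e .
qed


lemma tail_bound:
  assumes t: "0 \<le> t" "t \<le> 1" and K: "mn q \<le> K"
  shows "norm (\<Sum>n. (t ^ (n+m) / fact (n+m)) *\<^sub>R (mat_pow q (n+m) *v v)) \<le> t^m * K^m * nu v * exp K"
proof -
  have K0: "0 \<le> K" using K mn_nonneg order_trans by blast
  have b: "norm ((t ^ (n+m) / fact (n+m)) *\<^sub>R (mat_pow q (n+m) *v v)) \<le> (t^m * K^m * nu v) * (K^n / fact n)" for n
  proof -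
    have "norm ((t ^ (n+m) / fact (n+m)) *\<^sub>R (mat_pow q (n+m) *v v)) = (t ^ (n+m) / fact (n+m)) * norm (mat_pow q (n+m) *v v)"
      using t by simp
    also have "\<dots> \<le> (t ^ (n+m) / fact (n+m)) * (K ^ (n+m) * nu v)"
    proof (rule mult_left_mono)
      have "norm (mat_pow q (n+m) *v v) \<le> nu (mat_pow q (n+m) *v v)" by (rule norm_le_nu)
      also have "\<dots> \<le> mn q ^ (n+m) * nu v" by (rule nu_pow)
      also have "\<dots> \<le> K ^ (n+m) * nu v"
        by (intro mult_right_mono power_mono K mn_nonneg nu_nonneg)
      finally show "norm (mat_pow q (n+m) *v v) \<le> K ^ (n+m) * nu v" .
    qed (use t in simp)
    also have "\<dots> = (t^m * t^n) * (K^m * K^n / fact (n+m)) * nu v"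
      by (simp add: power_add mult_ac)
    also have "\<dots> \<le> (t^m * 1) * (K^m * K^n / fact n) * nu v"
    proof (intro mult_right_mono mult_mono nu_nonneg)
      show "t ^ n \<le> 1" using t by (simp add: power_le_one)
      show "K ^ m * K ^ n / fact (n + m) \<le> K ^ m * K ^ n / fact n"
        by (rule divide_left_mono) (use K0 in \<open>simp_all add: fact_mono\<close>)
    qed (use t K0 in simp_all)
    also have "\<dots> = (t^m * K^m * nu v) * (K^n / fact n)" by simp
    finally show ?thesis .
  qed
  have s: "(\<lambda>n. (t^m * K^m * nu v) * (K^n / fact n)) sums ((t^m * K^m * nu v) * exp K)"
    by (rule sums_mult[OF exp_sums_real])
  have "norm (\<Sum>n. (t ^ (n+m) / fact (n+m)) *\<^sub>R (mat_pow q (n+m) *v v)) \<le> (\<Sum>n. (t^m * K^m * nu v) * (K^n / fact n))"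
    by (rule norm_suminf_le[OF b]) (use s in \<open>simp add: sums_iff\<close>)
  also have "\<dots> = t^m * K^m * nu v * exp K" using s by (simp add: sums_iff)
  finally show ?thesis .
qed

lemma exp_expand2:
  assumes t: "0 \<le> t" "t \<le> 1" and K: "mn q \<le> K"
  shows "norm (mat_exp (t *\<^sub>R q) *v v - v - t *\<^sub>R (q *v v)) \<le> t^2 * K^2 * nu v * exp K"
proof -
  define a where "a = (\<lambda>n. (t ^ n / fact n) *\<^sub>R (mat_pow q n *v v))"
  have sm: "summable a" unfolding a_def by (rule sums_summable[OF matexp_mv_sums])
  have e1: "mat_exp (t *\<^sub>R q) *v v = suminf a" unfolding a_def by (rule sums_unique[OF matexp_mv_sums])
  have e2: "suminf a = (\<Sum>n. a (n+2)) + (\<Sum>i<2. a i)" by (rule suminf_split_initial_segment[OF sm])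
  have e3: "(\<Sum>i<2. a i) = v + t *\<^sub>R (q *v v)"
    by (simp add: a_def numeral_2_eq_2 lessThan_Suc matrix_mul_rid)
  have "mat_exp (t *\<^sub>R q) *v v - v - t *\<^sub>R (q *v v) = (\<Sum>n. a (n+2))"
    using e1 e2 e3 by (simp add: algebra_simps)
  then show ?thesis using tail_bound[OF t K, of 2 v] by (simp add: a_def)
qed

lemma exp_expand1:
  assumes t: "0 \<le> t" "t \<le> 1" and K: "mn q \<le> K"
  shows "norm (mat_exp (t *\<^sub>R q) *v v - v) \<le> t * K * nu v * exp K"
proof -
  define a where "a = (\<lambda>n. (t ^ n / fact n) *\<^sub>R (mat_pow q n *v v))"
  have sm: "summable a" unfolding a_def by (rule sums_summable[OF matexp_mv_sums])
  have e1: "mat_exp (t *\<^sub>R q) *v v = suminf a" unfolding a_def by (rule sums_unique[OF matexp_mv_sums])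
  have e2: "suminf a = (\<Sum>n. a (n+1)) + (\<Sum>i<1. a i)" by (rule suminf_split_initial_segment[OF sm])
  have e3: "(\<Sum>i<1. a i) = v"
    by (simp add: a_def)
  have "mat_exp (t *\<^sub>R q) *v v - v = (\<Sum>n. a (n+1))"
    using e1 e2 e3 by (simp add: algebra_simps)
  then show ?thesis using tail_bound[OF t K, of 1 v] by (simp add: a_def)
qed


lemma cont_matexp: "continuous_on {0..1} (\<lambda>r. mat_exp (r *\<^sub>R q) *v v)"
proof -
  let ?f = "\<lambda>n r. (r ^ n / fact n) *\<^sub>R (mat_pow q n *v v)"
  have ul: "uniform_limit {0..1} (\<lambda>N r. \<Sum>i<N. ?f i r) (\<lambda>r. suminf (\<lambda>i. ?f i r)) sequentially"
  proof (rule Weierstrass_m_test)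
    fix n and r :: real assume r: "r \<in> {0..1}"
    have "norm (?f n r) = (r ^ n / fact n) * norm (mat_pow q n *v v)" using r by simp
    also have "\<dots> \<le> (1 / fact n) * (mn q ^ n * nu v)"
    proof (rule mult_mono)
      show "r ^ n / fact n \<le> 1 / fact n" using r by (simp add: divide_right_mono power_le_one)
      show "norm (mat_pow q n *v v) \<le> mn q ^ n * nu v" using norm_le_nu nu_pow order_trans by blast
    qed (use r in simp_all)
    also have "\<dots> = (mn q ^ n / fact n) * nu v" by simp
    finally show "norm (?f n r) \<le> (mn q ^ n / fact n) * nu v" .
  next
    show "summable (\<lambda>n. (mn q ^ n / fact n) * nu v)"
      by (rule summable_mult2) (rule sums_summable[OF exp_sums_real])
  qed
  have "continuous_on {0..1} (\<lambda>r. suminf (\<lambda>i. ?f i r))"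
    by (rule uniform_limit_theorem[OF _ ul]) (auto intro!: always_eventually continuous_intros)
  moreover have "suminf (\<lambda>i. ?f i r) = mat_exp (r *\<^sub>R q) *v v" for r
    by (rule sums_unique[OF matexp_mv_sums, symmetric])
  ultimately show ?thesis by simp
qed

lemma integral_expand:
  assumes t: "0 \<le> t" "t \<le> 1" and K: "mn q \<le> K"
  shows "norm (integral {0..t} (\<lambda>r. mat_exp (r *\<^sub>R q) *v v) - t *\<^sub>R v) \<le> t^2 * K * nu v * exp K"
proof -
  have c: "continuous_on {0..t} (\<lambda>r. mat_exp (r *\<^sub>R q) *v v)"
    by (rule continuous_on_subset[OF cont_matexp]) (use t in auto)
  have c2: "continuous_on {0..t} (\<lambda>r. mat_exp (r *\<^sub>R q) *v v - v)"
    using c by (intro continuous_intros)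
  have "integral {0..t} (\<lambda>r. mat_exp (r *\<^sub>R q) *v v - v) = integral {0..t} (\<lambda>r. mat_exp (r *\<^sub>R q) *v v) - t *\<^sub>R v"
  proof -
    have "integral {0..t} (\<lambda>r. mat_exp (r *\<^sub>R q) *v v - v) = integral {0..t} (\<lambda>r. mat_exp (r *\<^sub>R q) *v v) - integral {0..t} (\<lambda>r. v)"
      by (rule integral_diff[OF integrable_continuous_interval[OF c] integrable_continuous_interval[OF continuous_on_const]])
    also have "integral {0..t} (\<lambda>r. v) = t *\<^sub>R v" using t by simp
    finally show ?thesis .
  qed
  moreover have "norm (integral {0..t} (\<lambda>r. mat_exp (r *\<^sub>R q) *v v - v)) \<le> (t * K * nu v * exp K) * (t - 0)"
  proof (rule integral_bound[OF _ c2])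
    fix r assume r: "r \<in> {0..t}"
    have "norm (mat_exp (r *\<^sub>R q) *v v - v) \<le> r * K * nu v * exp K"
      by (rule exp_expand1) (use r t K in auto)
    also have "\<dots> \<le> t * K * nu v * exp K"
      using r K mn_nonneg[of q] nu_nonneg[of v]
      by (intro mult_right_mono) auto
    finally show "norm (mat_exp (r *\<^sub>R q) *v v - v) \<le> t * K * nu v * exp K" .
  qed (use t in simp)
  ultimately show ?thesis by (simp add: power2_eq_square mult_ac)
qed


lemma Sq_expand:
  assumes s: "0 \<le> s" "s \<le> 1" and K: "mn q \<le> K"
  shows "norm (S_q q fq s w - w - s *\<^sub>R (q *v w + fq)) \<le> s^2 * (K^2 * nu w * exp K + K * nu fq * exp K)"
proof -
  have "S_q q fq s w - w - s *\<^sub>R (q *v w + fq) = (mat_exp (s *\<^sub>R q) *v w - w - s *\<^sub>R (q *v w)) + (integral {0..s} (\<lambda>r. mat_exp (r *\<^sub>R q) *v fq) - s *\<^sub>R fq)"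
    by (simp add: S_q_def algebra_simps)
  then have "norm (S_q q fq s w - w - s *\<^sub>R (q *v w + fq)) \<le> norm (mat_exp (s *\<^sub>R q) *v w - w - s *\<^sub>R (q *v w)) + norm (integral {0..s} (\<lambda>r. mat_exp (r *\<^sub>R q) *v fq) - s *\<^sub>R fq)"
    by (metis norm_triangle_ineq)
  also have "\<dots> \<le> s^2 * K^2 * nu w * exp K + s^2 * K * nu fq * exp K"
    by (intro add_mono exp_expand2 integral_expand s K)
  finally show ?thesis by (simp add: algebra_simps)
qed

lemma abs_le_norm_inf: "\<bar>v $ i\<bar> \<le> norm_inf v"
  unfolding norm_inf_def by (rule Max_ge) auto

lemma norm_inf_le: "(\<And>i. \<bar>v $ i\<bar> \<le> c) \<Longrightarrow> norm_inf v \<le> c"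
  unfolding norm_inf_def by (subst Max_le_iff) auto

lemma norm_inf_nonneg: "0 \<le> norm_inf v"
  using abs_le_norm_inf[of v] abs_ge_zero order_trans by blast

lemma diffs_sum: "xs \<noteq> [] \<Longrightarrow> sum_list (map2 (\<lambda>a b. b - a) xs (tl xs)) = last xs - hd (xs :: real list)"
proof (induction xs)
  case Nil then show ?case by simp
next
  case (Cons x xs)
  show ?case
  proof (cases xs)
    case Nil then show ?thesis by simp
  next
    case (Cons y ys)
    then show ?thesis using Cons.IH by simp
  qed
qed

lemma diffs_nonneg': "sorted xs \<Longrightarrow> \<forall>d\<in>set (map2 (\<lambda>a b. b - a) xs (tl xs)). 0 \<le> (d::real)"
proof (induction xs)
  case Nil then show ?case by simp
next
  case (Cons x xs)
  show ?case
  proof (cases xs)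
    case Nil then show ?thesis using Cons.prems by simp
  next
    case (Cons y ys)
    then show ?thesis using Cons.IH Cons.prems by (auto simp: set_zip)
  qed
qed

lemma diffs_nonneg: "sorted xs \<Longrightarrow> d \<in> set (map2 (\<lambda>a b. b - a) xs (tl xs)) \<Longrightarrow> 0 \<le> (d::real)"
  using diffs_nonneg' by blast

lemma sorted_hd_last: "sorted xs \<Longrightarrow> x \<in> set xs \<Longrightarrow> hd xs \<le> x \<and> x \<le> last (xs :: real list)"
proof (induction xs)
  case Nil then show ?case by simp
next
  case (Cons y ys)
  show ?case
  proof (cases ys)
    case Nil then show ?thesis using Cons.prems by simp
  next
    case (Cons z zs)
    then show ?thesis using Cons.IH Cons.prems by auto
  qed
qed

lemma E_part_foldr:
  assumes "\<pi> \<in> partitions_upto h" "0 < h"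
  shows "\<exists>hs. E_part P f \<pi> u0 = foldr (\<lambda>h g. E_h P f h \<circ> g) hs id u0 \<and> (\<forall>x\<in>set hs. 0 \<le> x) \<and> sum_list hs = h"
proof -
  have fin: "finite \<pi>" and z: "0 \<in> \<pi>" and nn: "\<forall>s\<in>\<pi>. 0 \<le> s" and mx: "Max \<pi> = h"
    using assms unfolding partitions_upto_def by auto
  have ne: "\<pi> \<noteq> {0}" using mx assms(2) by auto
  define ts where "ts = sorted_list_of_set \<pi>"
  have st: "sorted ts" and sts: "set ts = \<pi>" using fin by (auto simp: ts_def)
  have tne: "ts \<noteq> []" using sts z by auto
  have hd0: "hd ts = 0"
  proof -
    have "hd ts \<in> \<pi>" using tne sts hd_in_set by blast
    then have "0 \<le> hd ts" using nn by auto
    moreover have "hd ts \<le> 0" using sorted_hd_last[OF st, of 0] sts z by auto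
    ultimately show ?thesis by simp
  qed
  have lastm: "last ts = h"
  proof -
    have "last ts \<in> \<pi>" using tne sts last_in_set by blast
    moreover have "\<forall>x\<in>\<pi>. x \<le> last ts" using sorted_hd_last[OF st] sts by auto
    ultimately have "Max \<pi> = last ts" using fin by (intro Max_eqI) auto
    then show ?thesis using mx by simp
  qed
  define hs where "hs = map2 (\<lambda>a b. b - a) ts (tl ts)"
  have "E_part P f \<pi> u0 = foldr (\<lambda>h g. E_h P f h \<circ> g) hs id u0"
    using ne unfolding E_part_def hs_def ts_def Let_def by simp
  moreover have "\<forall>x\<in>set hs. 0 \<le> x" unfolding hs_def using diffs_nonneg[OF st] by blast
  moreover have "sum_list hs = h" unfolding hs_def using diffs_sum[OF tne] hd0 lastm by simp
  ultimately show ?thesis by blast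
qed

lemma E_part_0h: "0 < h \<Longrightarrow> E_part P f {0, h} u0 = E_h P f h u0"
  unfolding E_part_def by (simp add: Let_def)

theorem mainTheorem11:
  fixes P :: "(real ^ 'd ^ 'd) set" and f :: "real ^ 'd ^ 'd \<Rightarrow> real ^ 'd" and u0 :: "real ^ 'd"
  assumes Qmat: "\<forall>q\<in>P. is_Q_matrix q"
    and q0: "\<exists>q0\<in>P. f q0 = 0 \<and> (\<forall>q\<in>P. \<forall>i. f q $ i \<le> f q0 $ i)"
    and Qfinite: "\<forall>u i. bdd_above ((\<lambda>q. (q *v u + f q) $ i) ` P)"
    and fbdd: "bdd_above ((\<lambda>q. norm_inf (f q)) ` P)"
  shows "((\<lambda>h. norm_inf ((1 / h) *\<^sub>R (nisio P f h u0 - u0) - genQ P f u0)) \<longlongrightarrow> 0) (at_right 0)"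
proof -
  obtain q0 where q0P: "q0 \<in> P" and fq0: "f q0 = 0" using q0 by blast
  have Pne: "P \<noteq> {}" using q0P by blast
  obtain Fb where Fb: "\<forall>q\<in>P. norm_inf (f q) \<le> Fb" using fbdd by (auto simp: bdd_above_def)
  have fcomp: "\<bar>f q $ i\<bar> \<le> Fb" if "q \<in> P" for q i
    using abs_le_norm_inf[of "f q" i] Fb that by fastforce
  have entry: "\<exists>B. \<forall>q\<in>P. \<bar>q$i$j\<bar> \<le> B" for i j
  proof -
    obtain U1 where U1: "\<forall>q\<in>P. (q *v axis j 1 + f q)$i \<le> U1"
      using Qfinite[rule_format, of "axis j 1" i] by (auto simp: bdd_above_def)
    obtain U2 where U2: "\<forall>q\<in>P. (q *v (- axis j 1) + f q)$i \<le> U2"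
      using Qfinite[rule_format, of "- axis j 1" i] by (auto simp: bdd_above_def)
    have c1: "(q *v axis j 1)$i = q$i$j" for q :: "real^'d^'d"
      by (simp add: matrix_vector_mult_basis column_def)
    have c2: "(q *v (- axis j 1))$i = - q$i$j" for q :: "real^'d^'d"
      using c1[of q] by (simp add: matrix_vector_mult_def sum_negf)
    have "\<forall>q\<in>P. \<bar>q$i$j\<bar> \<le> max (U1 + Fb) (U2 + Fb)"
    proof
      fix q assume q: "q \<in> P"
      have "q$i$j + f q $ i \<le> U1" using U1 q c1[of q] by auto
      moreover have "- q$i$j + f q $ i \<le> U2" using U2 q c2[of q] by auto
      moreover have "\<bar>f q $ i\<bar> \<le> Fb" using fcomp q .
      ultimately show "\<bar>q$i$j\<bar> \<le> max (U1 + Fb) (U2 + Fb)" by linarith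
    qed
    then show ?thesis by blast
  qed
  then have "\<forall>i j. \<exists>B. \<forall>q\<in>P. \<bar>q$i$j\<bar> \<le> B" by blast
  then obtain B where B: "\<forall>i j. \<forall>q\<in>P. \<bar>q$i$j\<bar> \<le> B i j" by metis
  define K where "K = (\<Sum>i\<in>UNIV. \<Sum>j\<in>UNIV. B i j)"
  have Kq: "mn q \<le> K" if "q \<in> P" for q
    unfolding mn_def K_def using B that by (intro sum_mono) auto
  have K0: "0 \<le> K" using Kq[OF q0P] mn_nonneg[of q0] by linarith
  define F where "F = real CARD('d) * Fb"
  have nuf: "nu (f q) \<le> F" if "q \<in> P" for q
  proof -
    have "nu (f q) \<le> (\<Sum>i\<in>(UNIV::'d set). Fb)" unfolding nu_def using fcomp[OF that] by (intro sum_mono) auto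
    then show ?thesis by (simp add: F_def)
  qed
  have F0: "0 \<le> F" using nuf[OF q0P] nu_nonneg[of "f q0"] by linarith
  define R where "R = nu u0 + 1"
  define E0 where "E0 = K^2 * R * exp K + K * F * exp K"
  have R0: "0 \<le> R" unfolding R_def using nu_nonneg[of u0] by linarith
  have E00: "0 \<le> E0" unfolding E0_def using K0 R0 F0 by simp
  have expand: "\<bar>(S_q q (f q) s w - w - s *\<^sub>R (q *v w + f q))$i\<bar> \<le> s^2 * E0"
    if q: "q \<in> P" and s: "0 \<le> s" "s \<le> 1" and w: "nu w \<le> R" for q s w i
  proof -
    have "\<bar>(S_q q (f q) s w - w - s *\<^sub>R (q *v w + f q))$i\<bar> \<le> norm (S_q q (f q) s w - w - s *\<^sub>R (q *v w + f q))"
      by (rule component_le_norm_cart)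
    also have "\<dots> \<le> s^2 * (K^2 * nu w * exp K + K * nu (f q) * exp K)"
      by (rule Sq_expand[OF s Kq[OF q]])
    also have "\<dots> \<le> s^2 * E0" unfolding E0_def
      using w nuf[OF q] K0
      by (intro mult_left_mono add_mono mult_right_mono) (auto intro: mult_left_mono)
    finally show ?thesis .
  qed
  have qv: "\<bar>(q *v x)$i\<bar> \<le> K * nu x" if "q \<in> P" for q x i
  proof -
    have "\<bar>(q *v x)$i\<bar> \<le> nu (q *v x)" by (rule abs_le_nu)
    also have "\<dots> \<le> mn q * nu x" by (rule nu_mv)
    also have "\<dots> \<le> K * nu x" using Kq[OF that] nu_nonneg[of x] by (rule mult_right_mono)
    finally show ?thesis .
  qed
  define Qu where "Qu = genQ P f u0"
  have Qu_comp: "Qu $ i = (SUP q\<in>P. (q *v u0 + f q)$i)" for i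
    unfolding Qu_def genQ_def vsup_def by simp
  have Qu_ge: "(q *v u0 + f q)$i \<le> Qu$i" if "q \<in> P" for q i
    unfolding Qu_comp using that Qfinite by (intro cSUP_upper) auto
  have Eh_comp: "E_h P f s w $ i = (SUP q\<in>P. S_q q (f q) s w $ i)" for s w i
    unfolding E_h_def vsup_def by simp
  have Eh_upper: "E_h P f s w $ i \<le> c" if "\<forall>q\<in>P. S_q q (f q) s w $ i \<le> c" for s w i c
    unfolding Eh_comp using that Pne by (intro cSUP_least) auto
  have Eh_lower: "S_q q (f q) s w $ i \<le> E_h P f s w $ i"
    if "q \<in> P" "\<forall>q\<in>P. S_q q (f q) s w $ i \<le> c" for q s w i c
    unfolding Eh_comp using that by (intro cSUP_upper bdd_aboveI2) auto
  define G where "G = K * R + F + E0"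
  define M where "M = real CARD('d) * G + 1"
  define C where "C = K * M + E0"
  define h0 where "h0 = min 1 (1 / M)"
  have G0: "0 \<le> G" unfolding G_def using K0 R0 F0 E00 by simp
  have MG: "real CARD('d) * G \<le> M" unfolding M_def by simp
  have M0: "0 < M" unfolding M_def using G0 by (simp add: add_nonneg_pos)
  have h00: "0 < h0" unfolding h0_def using M0 by simp
  have Mh0: "M * h0 \<le> 1" unfolding h0_def using M0 by (simp add: min_def field_simps)
  have h01: "h0 \<le> 1" unfolding h0_def by simp
  have C0: "K * M \<le> C" "E0 \<le> C" unfolding C_def using E00 K0 M0 by auto
  have step_up: "E_h P f s w $ i \<le> w$i + s * (Qu$i + K * nu (w - u0)) + s^2 * E0"
    if s: "0 \<le> s" "s \<le> 1" and w: "nu w \<le> R" for s w i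
  proof (rule Eh_upper, intro ballI)
    fix q assume q: "q \<in> P"
    have e: "S_q q (f q) s w $ i - w $ i - s * (q *v w + f q) $ i \<le> s^2 * E0"
      using expand[OF q s w, of i] by simp
    have d: "(q *v w)$i = (q *v u0)$i + (q *v (w - u0))$i"
      by (simp add: matrix_vector_mult_def sum_subtractf right_diff_distrib)
    have "(q *v w + f q) $ i \<le> Qu$i + K * nu (w - u0)"
      using Qu_ge[OF q, of i] qv[OF q, of "w - u0" i] d by simp
    then have "s * (q *v w + f q) $ i \<le> s * (Qu$i + K * nu (w - u0))"
      using s(1) by (rule mult_left_mono)
    then show "S_q q (f q) s w $ i \<le> w$i + s * (Qu$i + K * nu (w - u0)) + s^2 * E0"
      using e by linarith
  qed
  have step_abs: "\<bar>E_h P f s w $ i - w $ i\<bar> \<le> s * G"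
    if s: "0 \<le> s" "s \<le> 1" and w: "nu w \<le> R" for s w i
  proof -
    have s2: "s^2 * E0 \<le> s * E0" using s E00 by (simp add: power2_eq_square mult_right_mono mult_left_le_one_le)
    have ub: "\<forall>q\<in>P. S_q q (f q) s w $ i \<le> w$i + s * (K * R + F) + s * E0"
    proof
      fix q assume q: "q \<in> P"
      have e: "S_q q (f q) s w $ i - w $ i - s * (q *v w + f q) $ i \<le> s^2 * E0"
        using expand[OF q s w, of i] by simp
      have "(q *v w + f q) $ i \<le> K * R + F"
      proof -
        have "\<bar>(q *v w)$i\<bar> \<le> K * R" using qv[OF q, of w i] w K0
          by (meson mult_left_mono order_trans)
        moreover have "\<bar>f q $ i\<bar> \<le> F" using abs_le_nu[of "f q" i] nuf[OF q] by linarith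
        ultimately show ?thesis by simp
      qed
      then have "s * (q *v w + f q) $ i \<le> s * (K * R + F)" using s(1) by (rule mult_left_mono)
      then show "S_q q (f q) s w $ i \<le> w$i + s * (K * R + F) + s * E0" using e s2 by linarith
    qed
    have up: "E_h P f s w $ i \<le> w$i + s * (K * R + F) + s * E0" by (rule Eh_upper[OF ub])
    have "S_q q0 (f q0) s w $ i \<le> E_h P f s w $ i" by (rule Eh_lower[OF q0P ub])
    moreover have "w $ i - s * (K * R) - s * E0 \<le> S_q q0 (f q0) s w $ i"
    proof -
      have e: "\<bar>S_q q0 (f q0) s w $ i - w $ i - s * (q0 *v w + f q0) $ i\<bar> \<le> s^2 * E0"
        using expand[OF q0P s w, of i] by simp
      have "\<bar>(q0 *v w)$i\<bar> \<le> K * R" using qv[OF q0P, of w i] w K0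
        by (meson mult_left_mono order_trans)
      then have "s * \<bar>(q0 *v w)$i\<bar> \<le> s * (K * R)" using s(1) by (rule mult_left_mono)
      moreover have "s * (- \<bar>(q0 *v w)$i\<bar>) \<le> s * (q0 *v w)$i"
        by (rule mult_left_mono) (use s in auto)
      ultimately show ?thesis using e s2 fq0 by (simp add: abs_le_iff)
    qed
    ultimately have lo: "w $ i - s * (K * R) - s * E0 \<le> E_h P f s w $ i" by linarith
    have g: "s * G = s * (K * R) + s * F + s * E0" unfolding G_def by (simp add: distrib_left)
    have g2: "s * (K * R + F) = s * (K * R) + s * F" by (rule distrib_left)
    have sF: "0 \<le> s * F" using s F0 by simp
    have x1: "E_h P f s w $ i - w $ i \<le> s * G" using up g g2 sF by linarith
    have x2: "- (E_h P f s w $ i - w $ i) \<le> s * G" using lo g sF by linarith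
    show ?thesis using x1 x2 by (rule abs_leI)
  qed
  have ind: "(\<forall>i. foldr (\<lambda>h g. E_h P f h \<circ> g) hs id u0 $ i \<le> u0$i + sum_list hs * Qu$i + C * (sum_list hs)^2)
      \<and> nu (foldr (\<lambda>h g. E_h P f h \<circ> g) hs id u0 - u0) \<le> M * sum_list hs"
    if "\<forall>x\<in>set hs. 0 \<le> x" "sum_list hs \<le> h0" for hs
    using that
  proof (induction hs)
    case Nil then show ?case by (simp add: nu_def)
  next
    case (Cons s hs)
    define t where "t = sum_list hs"
    define w where "w = foldr (\<lambda>h g. E_h P f h \<circ> g) hs id u0"
    have s0: "0 \<le> s" using Cons.prems by simp
    have t0: "0 \<le> t" unfolding t_def using Cons.prems by (simp add: sum_list_nonneg)
    have st: "s + t \<le> h0" using Cons.prems by (simp add: t_def)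
    have s1: "s \<le> 1" using st t0 h01 by linarith
    have th: "t \<le> h0" using st s0 by linarith
    have IH: "(\<forall>i. w $ i \<le> u0$i + t * Qu$i + C * t^2) \<and> nu (w - u0) \<le> M * t"
    proof -
      have hn: "\<forall>x\<in>set hs. 0 \<le> x" using Cons.prems by simp
      have ht: "sum_list hs \<le> h0" using th by (simp add: t_def)
      show ?thesis unfolding w_def t_def by (rule Cons.IH[OF hn ht])
    qed
    have wR: "nu w \<le> R"
    proof -
      have "nu w \<le> nu u0 + nu (w - u0)" using nu_add[of u0 "w - u0"] by simp
      also have "\<dots> \<le> nu u0 + M * t" using IH by simp
      also have "M * t \<le> M * h0" using th M0 by simp
      finally show ?thesis using Mh0 unfolding R_def by linarith
    qed
    have eq: "foldr (\<lambda>h g. E_h P f h \<circ> g) (s # hs) id u0 = E_h P f s w" by (simp add: w_def)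
    have sum: "sum_list (s # hs) = s + t" by (simp add: t_def)
    have up: "E_h P f s w $ i \<le> u0$i + (s + t) * Qu$i + C * (s + t)^2" for i
    proof -
      have a: "E_h P f s w $ i \<le> w$i + s * (Qu$i + K * nu (w - u0)) + s^2 * E0"
        by (rule step_up[OF s0 s1 wR])
      have b: "s * (K * nu (w - u0)) \<le> s * (K * (M * t))"
        using IH K0 s0 by (intro mult_left_mono) auto
      have c: "K * M * (s * t) \<le> C * (s * t)" using C0 s0 t0 by (intro mult_right_mono) auto
      have d: "E0 * s^2 \<le> C * s^2" using C0 by (intro mult_right_mono) auto
      have e: "C * (s + t)^2 = C * t^2 + 2 * C * (s * t) + C * s^2" by (simp add: power2_eq_square algebra_simps)
      have "w $ i \<le> u0$i + t * Qu$i + C * t^2" using IH by simp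
      moreover have "s * (Qu$i + K * nu (w - u0)) = s * Qu$i + s * (K * nu (w - u0))" by (rule distrib_left)
      moreover have "s^2 * E0 = E0 * s^2" by (rule mult.commute)
      moreover have "s * (K * (M * t)) = K * M * (s * t)" by (simp add: mult_ac)
      moreover have "(s + t) * Qu$i = s * Qu$i + t * Qu$i" by (rule distrib_right)
      moreover have "0 \<le> C * s^2" using C0 E00 by simp
      moreover have "0 \<le> C * (s * t)" using C0 E00 s0 t0 by simp
      ultimately show ?thesis using a b c d e by linarith
    qed
    have nub: "nu (E_h P f s w - u0) \<le> M * (s + t)"
    proof -
      have "nu (E_h P f s w - u0) \<le> nu (E_h P f s w - w) + nu (w - u0)"
        using nu_add[of "E_h P f s w - w" "w - u0"] by simp
      also have "nu (E_h P f s w - w) \<le> (\<Sum>i\<in>(UNIV::'d set). s * G)"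
        unfolding nu_def using step_abs[OF s0 s1 wR] by (intro sum_mono) simp
      also have "(\<Sum>i\<in>(UNIV::'d set). s * G) = s * (real CARD('d) * G)" by simp
      also have "\<dots> \<le> s * M" using MG s0 by (rule mult_left_mono)
      finally show ?thesis using IH by (simp add: algebra_simps)
    qed
    show ?case unfolding eq sum using up nub by simp
  qed
  have part_up: "E_part P f \<pi> u0 $ i \<le> u0$i + h * Qu$i + C * h^2"
    if hp: "\<pi> \<in> partitions_upto h" "0 < h" "h \<le> h0" for \<pi> h i
  proof -
    obtain hs where hs: "E_part P f \<pi> u0 = foldr (\<lambda>h g. E_h P f h \<circ> g) hs id u0"
      "\<forall>x\<in>set hs. 0 \<le> x" "sum_list hs = h"
      using E_part_foldr[OF hp(1,2), of P f u0] by blast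
    show ?thesis using ind[OF hs(2)] hs(1,3) hp(3) by simp
  qed
  have bound: "norm_inf ((1 / h) *\<^sub>R (nisio P f h u0 - u0) - Qu) \<le> h * (C + E0)"
    if h: "0 < h" "h \<le> h0" for h
  proof (rule norm_inf_le)
    fix i
    have mem: "{0, h} \<in> partitions_upto h" unfolding partitions_upto_def using h by auto
    have ne: "partitions_upto h \<noteq> {}" using mem by blast
    have ncomp: "nisio P f h u0 $ i = (SUP \<pi>\<in>partitions_upto h. E_part P f \<pi> u0 $ i)"
      unfolding nisio_def vsup_def by simp
    have nup: "nisio P f h u0 $ i \<le> u0$i + h * Qu$i + C * h^2"
      unfolding ncomp using part_up h ne by (intro cSUP_least) auto
    have nlo: "E_h P f h u0 $ i \<le> nisio P f h u0 $ i"
    proof -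
      have "E_part P f {0, h} u0 $ i \<le> nisio P f h u0 $ i"
        unfolding ncomp using part_up h mem by (intro cSUP_upper bdd_aboveI2) auto
      then show ?thesis by (simp only: E_part_0h[OF h(1)])
    qed
    have h1: "h \<le> 1" using h h01 by linarith
    have u0R: "nu u0 \<le> R" unfolding R_def by simp
    have lo: "(q *v u0 + f q)$i \<le> (nisio P f h u0 $ i - u0 $ i) / h + h * E0" if q: "q \<in> P" for q
    proof -
      have e: "\<bar>S_q q (f q) h u0 $ i - u0 $ i - h * (q *v u0 + f q) $ i\<bar> \<le> h^2 * E0"
        using expand[OF q _ h1 u0R, of i] h by simp
      have ub: "\<forall>q\<in>P. S_q q (f q) h u0 $ i \<le> u0 $ i + h * Qu $ i + h^2 * E0"
      proof
        fix q' assume q': "q' \<in> P"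
        have e': "\<bar>S_q q' (f q') h u0 $ i - u0 $ i - h * (q' *v u0 + f q') $ i\<bar> \<le> h^2 * E0"
          using expand[OF q' _ h1 u0R, of i] h by simp
        have "h * (q' *v u0 + f q') $ i \<le> h * Qu $ i"
          using Qu_ge[OF q'] h by (intro mult_left_mono) auto
        then show "S_q q' (f q') h u0 $ i \<le> u0 $ i + h * Qu $ i + h^2 * E0"
          using e' by (simp add: abs_le_iff)
      qed
      have "S_q q (f q) h u0 $ i \<le> E_h P f h u0 $ i"
        by (rule Eh_lower[OF q ub])
      then have "u0 $ i + h * (q *v u0 + f q) $ i - h^2 * E0 \<le> nisio P f h u0 $ i"
        using e nlo by (simp add: abs_le_iff)
      then have "h * (q *v u0 + f q) $ i \<le> (nisio P f h u0 $ i - u0 $ i) + h * (h * E0)"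
        by (simp add: power2_eq_square algebra_simps)
      moreover have "h * ((nisio P f h u0 $ i - u0 $ i) / h + h * E0) = (nisio P f h u0 $ i - u0 $ i) + h * (h * E0)"
        using h by (simp add: distrib_left)
      ultimately have "h * (q *v u0 + f q) $ i \<le> h * ((nisio P f h u0 $ i - u0 $ i) / h + h * E0)"
        by linarith
      then show ?thesis using h by simp
    qed
    have Qlo: "Qu $ i \<le> (nisio P f h u0 $ i - u0 $ i) / h + h * E0"
      unfolding Qu_comp using lo Pne by (intro cSUP_least) auto
    have "h * ((nisio P f h u0 $ i - u0 $ i) / h) = nisio P f h u0 $ i - u0 $ i" using h by simp
    moreover have "h * (Qu$i + C * h) = h * Qu$i + C * h^2" by (simp add: power2_eq_square algebra_simps)
    ultimately have "h * ((nisio P f h u0 $ i - u0 $ i) / h) \<le> h * (Qu$i + C * h)"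
      using nup by linarith
    then have Qup: "(nisio P f h u0 $ i - u0 $ i) / h \<le> Qu$i + C * h"
      using h(1) by (simp add: pos_divide_le_eq mult.commute)
    have comp: "((1 / h) *\<^sub>R (nisio P f h u0 - u0) - Qu) $ i = (nisio P f h u0 $ i - u0 $ i) / h - Qu $ i"
      by simp
    show "\<bar>((1 / h) *\<^sub>R (nisio P f h u0 - u0) - Qu) $ i\<bar> \<le> h * (C + E0)"
    proof -
      have c1: "0 \<le> C * h" "0 \<le> E0 * h" using h C0 E00 by simp_all
      have c2: "h * (C + E0) = C * h + E0 * h" by (simp add: algebra_simps)
      show ?thesis unfolding comp c2 using Qlo Qup c1 by (intro abs_leI) (simp_all add: mult.commute)
    qed
  qed
  show ?thesis
  proof (rule tendsto_sandwich[where f="\<lambda>h. 0" and h="\<lambda>h. h * (C + E0)"])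
    show "\<forall>\<^sub>F h in at_right 0. 0 \<le> norm_inf ((1 / h) *\<^sub>R (nisio P f h u0 - u0) - genQ P f u0)"
      by (simp add: norm_inf_nonneg)
    show "\<forall>\<^sub>F h in at_right 0. norm_inf ((1 / h) *\<^sub>R (nisio P f h u0 - u0) - genQ P f u0) \<le> h * (C + E0)"
      unfolding eventually_at_right_field
      using h00 bound unfolding Qu_def by (intro exI[of _ h0]) auto
    show "((\<lambda>h. 0) \<longlongrightarrow> (0::real)) (at_right 0)" by (rule tendsto_const)
    have "((\<lambda>h. h * (C + E0)) \<longlongrightarrow> 0 * (C + E0)) (at_right (0::real))"
      by (intro tendsto_intros)
    then show "((\<lambda>h. h * (C + E0)) \<longlongrightarrow> 0) (at_right (0::real))" by simp
  qed
qed
end
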